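(* There exists $C>0$ such that for all $t\in[0,T]$ and all $h\in(0,1]$, $$\int_0^t\big|g^{(h)}(t,u)-1\big|\,du\le C\,h^{\alpha},\qquad \int_0^t\big|g^{(h)}(t,u)-1\big|^2\,du\le C\,h.$$
   Context: Fix $T>0$ and $\alpha\in(1/2,1)$. Let $K(u)=\frac{u^{\alpha-1}}{\Gamma(\alpha)}\mathbf 1_{u>0}$ and $L(u)=\frac{u^{-\alpha}}{\Gamma(1-\alpha)}\mathbf 1_{u>0}$. For $h>0$ let $\varphi_h(t)=h\lfloor t/h\rfloor$. Define $K^{(h)}(t,s)=K(\varphi_h(t)-s)\mathbf 1_{0\le s<\varphi_h(t)}$ and $g^{(h)}(t,s)=\int_s^tL(t-v)K^{(h)}(v,s)\,dv$ for $0\le s<t\le T$. *)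

theory Defs
  imports "HOL-Analysis.Analysis"
begin

definition kerK :: "real \<Rightarrow> real \<Rightarrow> real" where
  "kerK \<alpha> u = (if u > 0 then u powr (\<alpha> - 1) / Gamma \<alpha> else 0)"

definition kerL :: "real \<Rightarrow> real \<Rightarrow> real" where
  "kerL \<alpha> u = (if u > 0 then u powr (- \<alpha>) / Gamma (1 - \<alpha>) else 0)"

definition phi :: "real \<Rightarrow> real \<Rightarrow> real" where
  "phi h t = h * of_int \<lfloor>t / h\<rfloor>"

definition Kh :: "real \<Rightarrow> real \<Rightarrow> real \<Rightarrow> real \<Rightarrow> real" where
  "Kh \<alpha> h t s = (if 0 \<le> s \<and> s < phi h t then kerK \<alpha> (phi h t - s) else 0)"

definition gh :: "real \<Rightarrow> real \<Rightarrow> real \<Rightarrow> real \<Rightarrow> real" where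
  "gh \<alpha> h t s = (LINT v:{s..t}|lborel. kerL \<alpha> (t - v) * Kh \<alpha> h v s)"

end

theory Submission
  imports Defs
begin

lemma kerK_nonneg: "0 < a \<Longrightarrow> 0 \<le> kerK a x"
  by (simp add: kerK_def Gamma_real_pos)
lemma kerL_nonneg: "a < 1 \<Longrightarrow> 0 \<le> kerL a x"
  by (simp add: kerL_def Gamma_real_pos)

lemma kerK_scale: assumes "h > 0" shows "kerK a (h*x) = h powr (a-1) * kerK a x"
  using assms by (auto simp: kerK_def powr_mult zero_less_mult_iff)

lemma kerL_scale: assumes "h > 0" shows "kerL a (h*x) = h powr (-a) * kerL a x"
  using assms by (auto simp: kerL_def powr_mult zero_less_mult_iff)

lemma phi_scale: assumes "h > 0" shows "phi h (h*w) = h * phi 1 w"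
  using assms by (simp add: phi_def)

lemma Kh_scale: assumes "h > 0" shows "Kh a h (h*w) s = h powr (a-1) * Kh a 1 w (s/h)"
proof -
  have e: "h * phi 1 w - s = h * (phi 1 w - s/h)" using assms by (simp add: field_simps)
  have c: "(0 \<le> s \<and> s < h * phi 1 w) = (0 \<le> s/h \<and> s/h < phi 1 w)"
    using assms by (simp add: field_simps)
  show ?thesis unfolding Kh_def phi_scale[OF assms] e kerK_scale[OF assms] c by simp
qed

lemma gh_scale: assumes "h > 0" shows "gh a h t s = gh a 1 (t/h) (s/h)"
proof -
  have "gh a h t s = (\<integral>v. indicator {s..t} v *\<^sub>R (kerL a (t - v) * Kh a h v s) \<partial>lborel)"
    by (simp add: gh_def set_lebesgue_integral_def)
  also have "\<dots> = \<bar>h\<bar> *\<^sub>R (\<integral>w. indicator {s..t} (0 + h*w) *\<^sub>R (kerL a (t - (0 + h*w)) * Kh a h (0 + h*w) s) \<partial>lborel)"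
    using assms by (intro lborel_integral_real_affine) simp
  also have "\<dots> = (\<integral>w. indicator {s/h..t/h} w *\<^sub>R (kerL a (t/h - w) * Kh a 1 w (s/h)) \<partial>lborel)"
  proof -
    have "indicator {s..t} (h*w) *\<^sub>R (kerL a (t - h*w) * Kh a h (h*w) s)
        = (1/h) * (indicator {s/h..t/h} w *\<^sub>R (kerL a (t/h - w) * Kh a 1 w (s/h)))" for w
    proof -
      have i: "indicator {s..t} (h*w) = (indicator {s/h..t/h} w :: real)"
        using assms by (simp add: indicator_def field_simps)
      have l: "t - h*w = h * (t/h - w)" using assms by (simp add: field_simps)
      have "h powr (-a) * h powr (a-1) = h powr (-a + (a-1))" by (rule powr_add[symmetric])
      also have "\<dots> = 1/h" using assms by (simp add: powr_minus_divide)
      finally have p: "h powr (-a) * h powr (a-1) = 1/h" .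
      show ?thesis unfolding i l kerL_scale[OF assms] Kh_scale[OF assms]
        by (simp only: p[symmetric] indicator_scaleR_eq_if) (simp add: ac_simps)
    qed
    then show ?thesis using assms by (simp add: integral_mult_right_zero)
  qed
  also have "\<dots> = gh a 1 (t/h) (s/h)"
    by (simp add: gh_def set_lebesgue_integral_def)
  finally show ?thesis .
qed

lemma set_affine:
  fixes f :: "real \<Rightarrow> real" and c :: real
  assumes "c \<noteq> 0"
  shows "(LINT v:A|lborel. f v) = \<bar>c\<bar> * (LINT x:{x. t + c*x \<in> A}|lborel. f (t + c*x))"
    and "set_integrable lborel A f \<longleftrightarrow> set_integrable lborel {x. t + c*x \<in> A} (\<lambda>x. f (t + c*x))"
proof -
  have i: "indicator A (t + c*x) = (indicator {x. t + c*x \<in> A} x :: real)" for x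
    by (simp add: indicator_def)
  show "(LINT v:A|lborel. f v) = \<bar>c\<bar> * (LINT x:{x. t + c*x \<in> A}|lborel. f (t + c*x))"
    unfolding set_lebesgue_integral_def
    using lborel_integral_real_affine[OF assms, of "\<lambda>v. indicator A v *\<^sub>R f v" t] i by simp
  show "set_integrable lborel A f \<longleftrightarrow> set_integrable lborel {x. t + c*x \<in> A} (\<lambda>x. f (t + c*x))"
    unfolding set_integrable_def
    using lborel_integrable_real_affine_iff[OF assms, of "\<lambda>v. indicator A v *\<^sub>R f v" t] i by simp
qed

lemma hk_to_set:
  fixes f :: "real \<Rightarrow> real"
  assumes hi: "(f has_integral I) S" and nn: "\<And>x. x \<in> S \<Longrightarrow> 0 \<le> f x"
    and S: "S \<in> sets borel" and m: "f \<in> borel_measurable borel"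
  shows "set_integrable lborel S f" "(LINT x:S|lborel. f x) = I"
proof -
  have "f integrable_on S" using hi by (auto simp: integrable_on_def)
  then have "f absolutely_integrable_on S" using nn by (rule nonnegative_absolutely_integrable_1)
  then have "integrable lebesgue (\<lambda>x. indicator S x *\<^sub>R f x)" by (simp add: set_integrable_def)
  moreover have "(\<lambda>x. indicator S x *\<^sub>R f x) \<in> borel_measurable lborel" using S m by measurable
  ultimately show si: "set_integrable lborel S f"
    unfolding set_integrable_def by (simp add: integrable_completion)
  show "(LINT x:S|lborel. f x) = I"
    using set_borel_integral_eq_integral(2)[OF si] hi by (simp add: integral_unique)
qed

lemma set_int_mono':
  fixes f g :: "real \<Rightarrow> real"
  assumes "set_integrable lborel A g" "\<And>x. x \<in> A \<Longrightarrow> f x \<le> g x" "\<And>x. x \<in> A \<Longrightarrow> 0 \<le> g x"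
  shows "(LINT x:A|lborel. f x) \<le> (LINT x:A|lborel. g x)"
  unfolding set_lebesgue_integral_def
  using assms(1) unfolding set_integrable_def
  by (rule integral_mono') (use assms(2,3) in \<open>auto simp: indicator_def\<close>)

lemma set_int_nonneg:
  fixes f :: "real \<Rightarrow> real"
  assumes "\<And>x. x \<in> A \<Longrightarrow> 0 \<le> f x"
  shows "0 \<le> (LINT x:A|lborel. f x)"
  unfolding set_lebesgue_integral_def
  by (rule Bochner_Integration.integral_nonneg) (use assms in \<open>auto simp: indicator_def\<close>)

lemma powr_int0:
  fixes p r :: real assumes "p > -1" "r \<ge> 0"
  shows "set_integrable lborel {0..r} (\<lambda>w. w powr p)"
    "(LINT w:{0..r}|lborel. w powr p) = r powr (p+1) / (p+1)"
  using hk_to_set[OF has_integral_powr_from_0[OF assms]] by auto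

lemma powr_int0_refl:
  fixes p r :: real assumes "p > -1" "r \<ge> 0"
  shows "set_integrable lborel {0..r} (\<lambda>w. (r - w) powr p)"
    "(LINT w:{0..r}|lborel. (r - w) powr p) = r powr (p+1) / (p+1)"
proof -
  have e: "{x. r + (-1)*x \<in> {0..r}} = {0..r}" by auto
  show "set_integrable lborel {0..r} (\<lambda>w. (r - w) powr p)"
    using set_affine(2)[where c="-1" and f="\<lambda>w. w powr p" and A="{0..r}" and t=r] powr_int0[OF assms] e by simp
  show "(LINT w:{0..r}|lborel. (r - w) powr p) = r powr (p+1) / (p+1)"
    using set_affine(1)[where c="-1" and f="\<lambda>w. w powr p" and A="{0..r}" and t=r] powr_int0[OF assms] e by simp
qed

lemma beta_unit:
  assumes a: "0 < a" "a < 1"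
  shows "set_integrable lborel {0..1} (\<lambda>x. kerL a (1 - x) * kerK a x)"
    "(LINT x:{0..1}|lborel. kerL a (1 - x) * kerK a x) = 1"
proof -
  define G where "G = Gamma a * Gamma (1 - a)"
  have G: "G > 0" using a by (simp add: G_def Gamma_real_pos)
  have eq: "kerL a (1 - x) * kerK a x = (x powr (a - 1) * (1 - x) powr ((1 - a) - 1)) / G"
    if "x \<in> {0..1}" for x
    using that by (auto simp: kerL_def kerK_def G_def powr_minus_divide)
  have bi: "set_integrable lborel {0..1} (\<lambda>x. x powr (a - 1) * (1 - x) powr ((1 - a) - 1))"
    using integrable_Beta[of a "1 - a"] a by simp
  have bv: "(LINT x:{0..1}|lborel. x powr (a - 1) * (1 - x) powr ((1 - a) - 1)) = Beta a (1 - a)"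
    using set_borel_integral_eq_integral(2)[OF bi] has_integral_Beta_real[of a "1-a"] a
    by (simp add: integral_unique)
  have B: "Beta a (1 - a) = G" by (simp add: Beta_def G_def)
  show "set_integrable lborel {0..1} (\<lambda>x. kerL a (1 - x) * kerK a x)"
  proof -
    have "set_integrable lborel {0..1} (\<lambda>x. (x powr (a - 1) * (1 - x) powr ((1 - a) - 1)) / G)"
      using bi by simp
    moreover have "set_integrable lborel {0..1} (\<lambda>x. kerL a (1 - x) * kerK a x) \<longleftrightarrow>
       set_integrable lborel {0..1} (\<lambda>x. (x powr (a - 1) * (1 - x) powr ((1 - a) - 1)) / G)"
      by (rule set_integrable_cong) (simp_all only: eq)
    ultimately show ?thesis by simp
  qed
  have "(LINT x:{0..1}|lborel. kerL a (1 - x) * kerK a x)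
      = (LINT x:{0..1}|lborel. (x powr (a - 1) * (1 - x) powr ((1 - a) - 1)) / G)"
    by (rule set_lebesgue_integral_cong) (use eq in auto)
  also have "\<dots> = 1" using bv B G by simp
  finally show "(LINT x:{0..1}|lborel. kerL a (1 - x) * kerK a x) = 1" .
qed

lemma beta_LK:
  assumes a: "0 < a" "a < 1" and st: "s < t"
  shows "set_integrable lborel {s..t} (\<lambda>v. kerL a (t - v) * kerK a (v - s))"
    "(LINT v:{s..t}|lborel. kerL a (t - v) * kerK a (v - s)) = 1"
proof -
  define r where "r = t - s"
  have r: "r > 0" using st by (simp add: r_def)
  have S: "{x. s + r*x \<in> {s..t}} = {0..1}"
  proof -
    have "s + r*x \<in> {s..t} \<longleftrightarrow> x \<in> {0..1}" for x
    proof -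
      have "t = s + r" by (simp add: r_def)
      then have "s + r*x \<in> {s..t} \<longleftrightarrow> 0 \<le> r*x \<and> r*x \<le> r*1" by simp
      also have "\<dots> \<longleftrightarrow> x \<in> {0..1}" using r by (simp add: zero_le_mult_iff mult_le_cancel_left_pos)
      finally show ?thesis .
    qed
    then show ?thesis by blast
  qed
  have fe: "kerL a (t - (s + r*x)) * kerK a (s + r*x - s) = (1/r) * (kerL a (1 - x) * kerK a x)" for x
  proof -
    have "kerL a (t - (s + r*x)) * kerK a (s + r*x - s) = kerL a (r*(1 - x)) * kerK a (r*x)"
    proof -
      have "t - (s + r*x) = r*(1 - x)" by (simp add: r_def algebra_simps)
      moreover have "s + r*x - s = r*x" by simp
      ultimately show ?thesis by simp
    qed
    also have "\<dots> = (r powr (-a) * r powr (a - 1)) * (kerL a (1 - x) * kerK a x)"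
      unfolding kerL_scale[OF r] kerK_scale[OF r] by (simp only: ac_simps)
    also have "r powr (-a) * r powr (a - 1) = 1/r"
    proof -
      have "r powr (-a) * r powr (a - 1) = r powr (-a + (a - 1))" by (rule powr_add[symmetric])
      also have "\<dots> = 1/r" using r by (simp add: powr_minus_divide)
      finally show ?thesis .
    qed
    finally show ?thesis .
  qed
  have rn: "r \<noteq> 0" using r by simp
  have i1: "set_integrable lborel {s..t} (\<lambda>v. kerL a (t - v) * kerK a (v - s)) \<longleftrightarrow>
     set_integrable lborel {0..1} (\<lambda>x. (1/r) * (kerL a (1 - x) * kerK a x))"
    using set_affine(2)[where c=r and t=s and A="{s..t}" and f="\<lambda>v. kerL a (t - v) * kerK a (v - s)", OF rn]
    unfolding S fe .
  have i2: "(LINT v:{s..t}|lborel. kerL a (t - v) * kerK a (v - s)) =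
     r * (LINT x:{0..1}|lborel. (1/r) * (kerL a (1 - x) * kerK a x))"
    using set_affine(1)[where c=r and t=s and A="{s..t}" and f="\<lambda>v. kerL a (t - v) * kerK a (v - s)", OF rn] r
    unfolding S fe by simp
  show "set_integrable lborel {s..t} (\<lambda>v. kerL a (t - v) * kerK a (v - s))"
    unfolding i1 using beta_unit[OF a] by simp
  show "(LINT v:{s..t}|lborel. kerL a (t - v) * kerK a (v - s)) = 1"
    unfolding i2 using beta_unit[OF a] r by simp
qed

definition dd :: "real \<Rightarrow> real" where "dd s = of_int \<lfloor>s\<rfloor> + 1 - s"
definition psi :: "real \<Rightarrow> real \<Rightarrow> real" where "psi a w = w powr (a - 1) / (1 + w)"

lemma dd_pos: "0 < dd s" and dd_le1: "dd s \<le> 1"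
  unfolding dd_def by linarith+

lemma dd_pow_ge1: assumes "a < 1" shows "1 \<le> dd s powr (a - 1)"
proof -
  have "dd s powr 0 \<le> dd s powr (a - 1)"
    by (rule powr_mono') (use assms dd_pos[of s] dd_le1[of s] in auto)
  then show ?thesis using dd_pos[of s] by simp
qed

lemma kerK_anti: assumes "0 < a" "a < 1" "0 < x" "x \<le> y" shows "kerK a y \<le> kerK a x"
proof -
  have "y powr (a - 1) \<le> x powr (a - 1)" by (rule powr_mono2') (use assms in auto)
  then show ?thesis using assms by (simp add: kerK_def divide_right_mono Gamma_real_pos)
qed

lemma pw_diff:
  fixes a w :: real assumes a: "0 < a" "a < 1" and w: "2 \<le> w"
  shows "(w - 1) powr (a - 1) - w powr (a - 1) \<le> 2 * w powr (a - 2)"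
proof -
  have w1: "w - 1 > 0" using w by simp
  have "(w - 1) powr a \<le> w powr a" by (rule powr_mono2) (use a w in auto)
  moreover have "(w - 1) powr a = (w - 1) powr (a - 1) * (w - 1)"
    using powr_add[of "w - 1" "a - 1" 1] w1 by simp
  moreover have "w powr a = w powr (a - 1) * w"
    using powr_add[of w "a - 1" 1] w by simp
  ultimately have "(w - 1) powr (a - 1) * (w - 1) \<le> w powr (a - 1) * w" by simp
  then have A: "(w - 1) powr (a - 1) \<le> w powr (a - 1) * w / (w - 1)"
    using w1 by (simp add: field_simps)
  have B: "w powr (a - 2) = w powr (a - 1) / w"
    using powr_diff[of w "a - 1" 1] w by simp
  have P: "w powr (a - 1) > 0" using w by simp
  have "w powr (a - 1) * w / (w - 1) - w powr (a - 1) = w powr (a - 1) / (w - 1)"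
    using w1 by (simp add: field_simps)
  also have "\<dots> \<le> 2 * (w powr (a - 1) / w)"
    using w1 w P by (simp add: field_simps)
  finally show ?thesis using A B by simp
qed

lemma kdiff:
  assumes a: "0 < a" "a < 1" and s: "0 \<le> s" "s < v"
  shows "\<bar>Kh a 1 v s - kerK a (v - s)\<bar> \<le> (6 / Gamma a) * dd s powr (a - 1) * psi a (v - s)"
proof -
  define w where "w = v - s"
  have w: "w > 0" using s by (simp add: w_def)
  have G: "Gamma a > 0" using a by (simp add: Gamma_real_pos)
  have D1: "1 \<le> dd s powr (a - 1)" using dd_pow_ge1 a by simp
  have phi1: "phi 1 v = of_int \<lfloor>v\<rfloor>" by (simp add: phi_def)
  have Kw: "kerK a w = w powr (a - 1) / Gamma a" using w by (simp add: kerK_def)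
  have wpos: "w powr (a - 1) > 0" using w by simp
  show ?thesis
  proof (cases "s < of_int \<lfloor>v\<rfloor>")
    case False
    then have Kh0: "Kh a 1 v s = 0" by (simp add: Kh_def phi1)
    have "\<lfloor>v\<rfloor> \<le> \<lfloor>s\<rfloor>" using False by (simp add: le_floor_iff)
    then have "w < dd s" unfolding w_def dd_def
      using of_int_le_iff[of "\<lfloor>v\<rfloor>" "\<lfloor>s\<rfloor>"] real_of_int_floor_add_one_gt[of v] by linarith
    then have w1: "w < 1" using dd_le1[of s] by simp
    have "\<bar>Kh a 1 v s - kerK a (v - s)\<bar> = w powr (a - 1) / Gamma a"
      using Kh0 Kw wpos G by (simp add: w_def[symmetric])
    also have "\<dots> \<le> (6 / Gamma a) * dd s powr (a - 1) * psi a w"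
    proof -
      have "1 \<le> 6 * dd s powr (a - 1) / (1 + w)" using D1 w1 w by (simp add: field_simps)
      then have "w powr (a - 1) * 1 \<le> w powr (a - 1) * (6 * dd s powr (a - 1) / (1 + w))"
        using wpos by (intro mult_left_mono) auto
      then have "w powr (a - 1) / Gamma a \<le> w powr (a - 1) * (6 * dd s powr (a - 1) / (1 + w)) / Gamma a"
        using G by (intro divide_right_mono) auto
      moreover have "(6 / Gamma a) * dd s powr (a - 1) * psi a w
          = w powr (a - 1) * (6 * dd s powr (a - 1) / (1 + w)) / Gamma a"
        using G w by (simp add: psi_def field_simps)
      ultimately show ?thesis by simp
    qed
    finally show ?thesis by (simp add: w_def)
  next
    case True
    define m where "m = (of_int \<lfloor>v\<rfloor> :: real)"
    have Khm: "Kh a 1 v s = kerK a (m - s)" using True s by (simp add: Kh_def phi1 m_def)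
    have "\<lfloor>s\<rfloor> < \<lfloor>v\<rfloor>" using True floor_less_iff by (metis floor_of_int floor_mono less_le_not_le not_le)
    then have "\<lfloor>s\<rfloor> + 1 \<le> \<lfloor>v\<rfloor>" by simp
    then have "real_of_int (\<lfloor>s\<rfloor> + 1) \<le> real_of_int \<lfloor>v\<rfloor>" by (simp only: of_int_le_iff)
    then have "of_int \<lfloor>s\<rfloor> + 1 \<le> m" by (simp add: m_def)
    then have md: "dd s \<le> m - s" by (simp add: dd_def)
    have mv: "m \<le> v" unfolding m_def by simp
    have mv1: "v - 1 < m" unfolding m_def by linarith
    have msp: "m - s > 0" using md dd_pos[of s] by linarith
    have KmKw: "kerK a w \<le> kerK a (m - s)" by (rule kerK_anti) (use a msp mv in \<open>auto simp: w_def\<close>)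
    have Kd: "kerK a (m - s) \<le> kerK a (dd s)" by (rule kerK_anti) (use a md dd_pos in auto)
    have Kdd: "kerK a (dd s) = dd s powr (a - 1) / Gamma a" using dd_pos[of s] by (simp add: kerK_def)
    have abs_eq: "\<bar>Kh a 1 v s - kerK a (v - s)\<bar> = kerK a (m - s) - kerK a w"
      using Khm KmKw by (simp add: w_def)
    show ?thesis
    proof (cases "w \<le> 2")
      case True
      have "kerK a (m - s) - kerK a w \<le> dd s powr (a - 1) / Gamma a"
        using Kd Kdd kerK_nonneg[of a w] a by simp
      also have "\<dots> \<le> (6 / Gamma a) * dd s powr (a - 1) * psi a w"
      proof -
        have "2 powr (a - 1) \<le> w powr (a - 1)" by (rule powr_mono2') (use a w True in auto)
        moreover have "2 powr (-1) \<le> 2 powr (a - 1)" by (rule powr_mono) (use a in auto)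
        ultimately have "1/2 \<le> w powr (a - 1)" by (simp add: powr_minus_divide)
        then have "1 \<le> 6 * (w powr (a - 1) / (1 + w))" using True w by (simp add: field_simps)
        then have "dd s powr (a - 1) * 1 \<le> dd s powr (a - 1) * (6 * (w powr (a - 1) / (1 + w)))"
          using D1 by (intro mult_left_mono) auto
        then have "dd s powr (a - 1) / Gamma a \<le> dd s powr (a - 1) * (6 * (w powr (a - 1) / (1 + w))) / Gamma a"
          using G by (intro divide_right_mono) auto
        moreover have "(6 / Gamma a) * dd s powr (a - 1) * psi a w
            = dd s powr (a - 1) * (6 * (w powr (a - 1) / (1 + w))) / Gamma a"
          by (simp add: psi_def ac_simps)
        ultimately show ?thesis by simp
      qed
      finally show ?thesis using abs_eq by (simp add: w_def)
    next
      case False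
      have "kerK a (m - s) \<le> kerK a (w - 1)" by (rule kerK_anti) (use a False mv1 in \<open>auto simp: w_def\<close>)
      then have "kerK a (m - s) - kerK a w \<le> ((w - 1) powr (a - 1) - w powr (a - 1)) / Gamma a"
        using False Kw by (simp add: kerK_def diff_divide_distrib)
      also have "\<dots> \<le> 2 * w powr (a - 2) / Gamma a"
        using pw_diff[OF a, of w] False G by (simp add: divide_right_mono)
      also have "\<dots> \<le> (6 / Gamma a) * dd s powr (a - 1) * psi a w"
      proof -
        have B: "w powr (a - 2) = w powr (a - 1) / w"
          using powr_diff[of w "a - 1" 1] w by simp
        have "2 * (w powr (a - 1) / w) \<le> 6 * (w powr (a - 1) / (1 + w))"
          using False wpos w by (simp add: field_simps)
        also have "\<dots> \<le> 6 * dd s powr (a - 1) * (w powr (a - 1) / (1 + w))"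
        proof -
          have "0 \<le> 6 * (w powr (a - 1) / (1 + w))" using wpos w by simp
          from mult_right_mono[OF D1 this] show ?thesis by (simp add: ac_simps)
        qed
        finally have "2 * w powr (a - 2) / Gamma a \<le> 6 * dd s powr (a - 1) * (w powr (a - 1) / (1 + w)) / Gamma a"
          using G B by (intro divide_right_mono) auto
        moreover have "(6 / Gamma a) * dd s powr (a - 1) * psi a w
            = 6 * dd s powr (a - 1) * (w powr (a - 1) / (1 + w)) / Gamma a"
          by (simp add: psi_def)
        ultimately show ?thesis by simp
      qed
      finally show ?thesis using abs_eq by (simp add: w_def)
    qed
  qed
qed

lemma int_split:
  fixes f :: "real \<Rightarrow> real"
  assumes "p \<le> q" "q \<le> u" "set_integrable lborel {p..q} f" "set_integrable lborel {q..u} f"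
  shows "set_integrable lborel {p..u} f"
    "(LINT x:{p..u}|lborel. f x) = (LINT x:{p..q}|lborel. f x) + (LINT x:{q..u}|lborel. f x)"
proof -
  have U: "{p..q} \<union> {q..u} = {p..u}" using assms(1,2) by auto
  show "set_integrable lborel {p..u} f"
    using set_integrable_Un[OF assms(3,4)] U by simp
  have "AE x in lborel. \<not> (x \<in> {p..q} \<and> x \<in> {q..u})"
    using AE_lborel_singleton[of q] by eventually_elim auto
  from set_integral_Un_AE[OF this _ _ assms(3,4)] U
  show "(LINT x:{p..u}|lborel. f x) = (LINT x:{p..q}|lborel. f x) + (LINT x:{q..u}|lborel. f x)"
    by simp
qed

lemma powr_int1:
  fixes e r :: real assumes e: "e < -1" and r: "1 \<le> r"
  shows "set_integrable lborel {1..r} (\<lambda>x. x powr e)"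
    "(LINT x:{1..r}|lborel. x powr e) \<le> -1 / (e + 1)"
proof -
  define F where "F = (\<lambda>x::real. x powr (e+1) / (e+1))"
  have "((\<lambda>x. x powr e) has_integral (F r - F 1)) {1..r}"
    unfolding F_def using e r
    by (intro fundamental_theorem_of_calculus)
       (auto intro!: derivative_eq_intros simp flip: has_real_derivative_iff_has_vector_derivative)
  from hk_to_set[OF this]
  have H: "set_integrable lborel {1..r} (\<lambda>x. x powr e)" "(LINT x:{1..r}|lborel. x powr e) = F r - F 1"
    by auto
  show "set_integrable lborel {1..r} (\<lambda>x. x powr e)" by (rule H(1))
  have "r powr (e+1) / (e+1) \<le> 0" using e r by (simp add: divide_nonneg_neg)
  then show "(LINT x:{1..r}|lborel. x powr e) \<le> -1 / (e + 1)" using H(2) by (simp add: F_def)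
qed

definition phi1 :: "real \<Rightarrow> real \<Rightarrow> real" where
  "phi1 a x = (if x \<le> 1 then x powr (a - 1) else x powr (a - 2))"

lemma phi1_int:
  assumes a: "0 < a" "a < 1" and r: "1 \<le> r"
  shows "set_integrable lborel {0..r} (phi1 a)" "(LINT x:{0..r}|lborel. phi1 a x) \<le> 1/a + 1/(1-a)"
proof -
  have c1: "set_integrable lborel {0..1} (phi1 a) \<longleftrightarrow> set_integrable lborel {0..1} (\<lambda>x. x powr (a - 1))"
    by (rule set_integrable_cong) (auto simp: phi1_def)
  have v1: "(LINT x:{0..1}|lborel. phi1 a x) = (LINT x:{0..1}|lborel. x powr (a - 1))"
    by (rule set_lebesgue_integral_cong) (auto simp: phi1_def)
  have c2: "set_integrable lborel {1..r} (phi1 a) \<longleftrightarrow> set_integrable lborel {1..r} (\<lambda>x. x powr (a - 2))"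
    by (rule set_integrable_cong) (auto simp: phi1_def)
  have v2: "(LINT x:{1..r}|lborel. phi1 a x) = (LINT x:{1..r}|lborel. x powr (a - 2))"
    by (rule set_lebesgue_integral_cong) (auto simp: phi1_def)
  have P0: "set_integrable lborel {0..1} (\<lambda>x. x powr (a - 1))"
    "(LINT x:{0..1}|lborel. x powr (a - 1)) = 1 / a"
    using powr_int0[of "a - 1" 1] a by auto
  have P1: "set_integrable lborel {1..r} (\<lambda>x. x powr (a - 2))"
    "(LINT x:{1..r}|lborel. x powr (a - 2)) \<le> 1/(1-a)"
  proof -
    have e: "-1 / ((a - 2) + 1) = 1/(1-a)"
    proof -
      have "(a - 2) + 1 = -(1 - a)" by simp
      then show ?thesis by (simp only: divide_minus_right)
    qed
    show "set_integrable lborel {1..r} (\<lambda>x. x powr (a - 2))" using powr_int1[of "a - 2" r] a r by auto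
    show "(LINT x:{1..r}|lborel. x powr (a - 2)) \<le> 1/(1-a)" using powr_int1[of "a - 2" r] a r e by auto
  qed
  have S: "set_integrable lborel {0..1} (phi1 a)" "set_integrable lborel {1..r} (phi1 a)"
    using c1 c2 P0 P1 by auto
  note sp = int_split[of 0 1 r, OF _ r S]
  show "set_integrable lborel {0..r} (phi1 a)" using sp by simp
  show "(LINT x:{0..r}|lborel. phi1 a x) \<le> 1/a + 1/(1-a)"
    using sp(2) v1 v2 P0(2) P1(2) by simp
qed

lemma psi_nonneg: "0 \<le> x \<Longrightarrow> 0 \<le> psi a x"
  by (simp add: psi_def)

lemma psi_le_pow: assumes "0 \<le> x" shows "psi a x \<le> x powr (a - 1)"
proof -
  have "x powr (a - 1) / (1 + x) \<le> x powr (a - 1) / 1"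
    by (rule divide_left_mono) (use assms in auto)
  then show ?thesis by (simp add: psi_def)
qed

lemma psi_le_K: assumes "0 < a" "0 \<le> x" shows "psi a x \<le> Gamma a * kerK a x"
proof (cases "x = 0")
  case True then show ?thesis by (simp add: psi_def kerK_def)
next
  case False
  then have x: "x > 0" using assms by simp
  have "psi a x \<le> x powr (a - 1)" using x by (simp add: psi_le_pow)
  then show ?thesis proof -
    have G: "Gamma a \<noteq> 0" using Gamma_real_pos[OF assms(1)] by simp
    show ?thesis using \<open>psi a x \<le> x powr (a - 1)\<close> x G by (simp add: kerK_def)
  qed
qed

lemma psi_le_phi1: assumes "0 \<le> x" shows "psi a x \<le> phi1 a x"
proof (cases "x \<le> 1")
  case True then show ?thesis using assms psi_le_pow[OF assms, of a] by (simp add: phi1_def)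
next
  case False
  then have "psi a x \<le> x powr (a - 1) / x" using assms
    by (simp add: psi_def frac_le)
  also have "\<dots> = x powr (a - 2)" using powr_diff[of x "a - 1" 1] False by simp
  finally show ?thesis using False by (simp add: phi1_def)
qed

lemma meas_Lpsi: "(\<lambda>x. kerL a (r - x) * psi a x) \<in> borel_measurable borel"
  unfolding kerL_def psi_def by measurable

definition CJ :: "real \<Rightarrow> real" where
  "CJ a = 3 * Gamma a + (3 * (1/a + 1/(1-a)) + 9/(1-a)) / Gamma (1 - a)"

lemma Jw:
  assumes a: "0 < a" "a < 1" and r: "0 < r"
  shows "set_integrable lborel {0..r} (\<lambda>x. kerL a (r - x) * psi a x)"
    "(LINT x:{0..r}|lborel. kerL a (r - x) * psi a x) \<le> CJ a * (1 + r) powr (-a)"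
proof -
  have Ga: "Gamma a > 0" and G1: "Gamma (1 - a) > 0" using a by (auto simp: Gamma_real_pos)
  have BLK: "set_integrable lborel {0..r} (\<lambda>x. kerL a (r - x) * kerK a x)"
    "(LINT x:{0..r}|lborel. kerL a (r - x) * kerK a x) = 1"
    using beta_LK[OF a r] by auto
  have pw1: "kerL a (r - x) * psi a x \<le> Gamma a * (kerL a (r - x) * kerK a x)" if "x \<in> {0..r}" for x
  proof -
    have "kerL a (r - x) * psi a x \<le> kerL a (r - x) * (Gamma a * kerK a x)"
      by (rule mult_left_mono) (use psi_le_K[OF a(1)] kerL_nonneg[OF a(2)] that in auto)
    then show ?thesis by (simp add: ac_simps)
  qed
  have nn: "0 \<le> kerL a (r - x) * psi a x" if "x \<in> {0..r}" for x
    using that kerL_nonneg[OF a(2)] psi_nonneg by simp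
  have BLK': "set_integrable lborel {0..r} (\<lambda>x. Gamma a * (kerL a (r - x) * kerK a x))"
    using BLK by simp
  show SI: "set_integrable lborel {0..r} (\<lambda>x. kerL a (r - x) * psi a x)"
  proof (rule set_integrable_bound[OF BLK'])
    show "set_borel_measurable lborel {0..r} (\<lambda>x. kerL a (r - x) * psi a x)"
      unfolding set_borel_measurable_def using meas_Lpsi[of a r] by measurable
    show "AE x in lborel. x \<in> {0..r} \<longrightarrow> norm (kerL a (r - x) * psi a x) \<le> norm (Gamma a * (kerL a (r - x) * kerK a x))"
      using pw1 nn by (intro AE_I2) (auto intro: order_trans[OF _ abs_ge_self])
  qed
  show "(LINT x:{0..r}|lborel. kerL a (r - x) * psi a x) \<le> CJ a * (1 + r) powr (-a)"
  proof (cases "r \<le> 2")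
    case True
    have "(LINT x:{0..r}|lborel. kerL a (r - x) * psi a x) \<le> (LINT x:{0..r}|lborel. Gamma a * (kerL a (r - x) * kerK a x))"
      by (rule set_int_mono'[OF BLK' pw1]) (use Ga kerL_nonneg[OF a(2)] kerK_nonneg[OF a(1)] in auto)
    also have "\<dots> = Gamma a" using BLK(2) by simp
    also have "\<dots> \<le> 3 * Gamma a * (1 + r) powr (-a)"
    proof -
      have "3 powr (-1) \<le> 3 powr (-a)" by (rule powr_mono) (use a in auto)
      moreover have "3 powr (-a) \<le> (1 + r) powr (-a)" by (rule powr_mono2') (use a r True in auto)
      ultimately have A: "3 powr (-1) \<le> (1 + r) powr (-a)" by (rule order_trans)
      have e3: "(3::real) powr (-1) = 1/3" by (simp add: powr_minus_divide)
      define X where "X = (1 + r) powr (-a)"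
      have "1/3 \<le> X" using A unfolding e3 X_def .
      then have "3 * Gamma a * (1/3) \<le> 3 * Gamma a * X" using Ga by (intro mult_left_mono) auto
      then show ?thesis by (simp add: X_def)
    qed
    also have "\<dots> \<le> CJ a * (1 + r) powr (-a)"
    proof -
      have "0 \<le> (3 * (1/a + 1/(1-a)) + 9/(1-a)) / Gamma (1 - a)" using a G1 by simp
      then show ?thesis unfolding CJ_def by (intro mult_right_mono) auto
    qed
    finally show ?thesis .
  next
    case False
    define R where "R = 1 + r"
    have R: "R \<ge> 3" using False by (simp add: R_def)
    have R3a: "(R/3) powr (-a) \<le> 3 * R powr (-a)"
    proof -
      have "(R/3) powr (-a) = R powr (-a) * 3 powr a"
        using R by (simp add: powr_divide powr_minus_divide)
      moreover have "3 powr a \<le> 3 powr 1" by (rule powr_mono) (use a in auto)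
      ultimately show ?thesis using R by (simp add: mult_left_mono)
    qed
    have R3b: "(R/3) powr (a - 2) \<le> 9 * R powr (a - 2)"
    proof -
      have "(R/3) powr (a - 2) = R powr (a - 2) * 3 powr (2 - a)"
      proof -
        have "(R/3) powr (a - 2) = R powr (a - 2) / 3 powr (a - 2)" using R by (simp add: powr_divide)
        moreover have "3 powr (a - 2) = 1 / 3 powr (2 - a)" using powr_minus_divide[of 3 "2 - a"] by simp
        ultimately show ?thesis by simp
      qed
      moreover have "3 powr (2 - a) \<le> 3 powr 2" by (rule powr_mono) (use a in auto)
      ultimately show ?thesis using R by (simp add: mult_left_mono)
    qed
    define B where "B = (\<lambda>x. (3 * R powr (-a) * phi1 a x + 9 * R powr (a - 2) * (r - x) powr (-a)) / Gamma (1 - a))"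
    have pw2: "kerL a (r - x) * psi a x \<le> B x" if x: "x \<in> {0..r}" for x
    proof (cases "x = r")
      case True
      have "0 \<le> phi1 a x" by (simp add: phi1_def)
      then have "0 \<le> B x" unfolding B_def using G1 by simp
      then show ?thesis using True by (simp add: kerL_def)
    next
      case False
      then have xr: "x < r" using x by simp
      have KL: "kerL a (r - x) = (r - x) powr (-a) / Gamma (1 - a)" using xr by (simp add: kerL_def)
      have ph: "0 \<le> phi1 a x" by (simp add: phi1_def)
      have rxp: "0 \<le> (r - x) powr (-a)" by simp
      show ?thesis
      proof (cases "x \<le> r/2")
        case True
        have "(r - x) powr (-a) \<le> (R/3) powr (-a)"
          by (rule powr_mono2') (use a True R xr in \<open>auto simp: R_def\<close>)
        then have A: "(r - x) powr (-a) \<le> 3 * R powr (-a)" using R3a by simp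
        have "(r - x) powr (-a) * psi a x \<le> (3 * R powr (-a)) * phi1 a x"
          by (rule mult_mono[OF A psi_le_phi1]) (use x psi_nonneg in auto)
        also have "\<dots> \<le> 3 * R powr (-a) * phi1 a x + 9 * R powr (a - 2) * (r - x) powr (-a)"
          by simp
        finally show ?thesis unfolding KL B_def using G1 by (simp add: divide_right_mono)
      next
        case False
        have x1: "R/3 \<le> x" using False R by (simp add: R_def)
        have "psi a x \<le> phi1 a x" by (rule psi_le_phi1) (use x in auto)
        also have "\<dots> = x powr (a - 2)" using x1 R by (cases "x = 1") (auto simp: phi1_def)
        also have "\<dots> \<le> (R/3) powr (a - 2)" by (rule powr_mono2') (use a x1 R in auto)
        also have "\<dots> \<le> 9 * R powr (a - 2)" by (rule R3b)
        finally have A: "psi a x \<le> 9 * R powr (a - 2)" .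
        have "(r - x) powr (-a) * psi a x \<le> (r - x) powr (-a) * (9 * R powr (a - 2))"
          by (rule mult_left_mono[OF A rxp])
        also have "\<dots> \<le> 3 * R powr (-a) * phi1 a x + 9 * R powr (a - 2) * (r - x) powr (-a)"
          using ph by (simp add: ac_simps)
        finally show ?thesis unfolding KL B_def using G1 by (simp add: divide_right_mono)
      qed
    qed
    have r1: "1 \<le> r" using False by simp
    note P1 = phi1_int[OF a r1]
    note P2 = powr_int0_refl[of "-a" r]
    have P2': "set_integrable lborel {0..r} (\<lambda>w. (r - w) powr (-a))"
      "(LINT w:{0..r}|lborel. (r - w) powr (-a)) = r powr (1 - a) / (1 - a)"
      using P2 a r by auto
    have BI: "set_integrable lborel {0..r} B"
      unfolding B_def using P1(1) P2'(1) by (intro set_integrable_divide set_integral_add set_integrable_mult_right) auto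
    have BV: "(LINT x:{0..r}|lborel. B x) =
       (3 * R powr (-a) * (LINT x:{0..r}|lborel. phi1 a x) + 9 * R powr (a - 2) * (r powr (1 - a) / (1 - a))) / Gamma (1 - a)"
      unfolding B_def using P1(1) P2'
      by (simp add: set_integral_add set_integrable_mult_right)
    have Bnn: "0 \<le> B x" if "x \<in> {0..r}" for x
      using pw2[OF that] nn[OF that] by simp
    have "(LINT x:{0..r}|lborel. kerL a (r - x) * psi a x) \<le> (LINT x:{0..r}|lborel. B x)"
      by (rule set_int_mono'[OF BI pw2 Bnn])
    also have "\<dots> \<le> (3 * R powr (-a) * (1/a + 1/(1-a)) + 9 * R powr (-a) / (1 - a)) / Gamma (1 - a)"
    proof -
      have X: "3 * R powr (-a) * (LINT x:{0..r}|lborel. phi1 a x) \<le> 3 * R powr (-a) * (1/a + 1/(1-a))"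
        using P1(2) by (intro mult_left_mono) auto
      have "R powr (a - 2) * r powr (1 - a) \<le> R powr (a - 2) * R powr (1 - a)"
        by (intro mult_left_mono powr_mono2) (use a r in \<open>auto simp: R_def\<close>)
      also have "\<dots> = R powr (-1)" using powr_add[of R "a - 2" "1 - a"] by simp
      also have "\<dots> \<le> R powr (-a)" by (rule powr_mono) (use a R in auto)
      finally have "R powr (a - 2) * r powr (1 - a) \<le> R powr (-a)" .
      then have Y: "9 * R powr (a - 2) * (r powr (1 - a) / (1 - a)) \<le> 9 * R powr (-a) / (1 - a)"
        using a by (simp add: divide_right_mono)
      show ?thesis unfolding BV using X Y G1 by (intro divide_right_mono) auto
    qed
    also have "\<dots> = ((3 * (1/a + 1/(1-a)) + 9/(1-a)) / Gamma (1 - a)) * R powr (-a)"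
      by (simp add: field_simps)
    also have "\<dots> \<le> CJ a * R powr (-a)"
      unfolding CJ_def using Ga by (intro mult_right_mono) auto
    finally show ?thesis by (simp add: R_def)
  qed
qed

lemma meas_D: "(\<lambda>v. kerL a (t - v) * (Kh a 1 v s - kerK a (v - s))) \<in> borel_measurable borel"
  unfolding kerL_def Kh_def phi_def kerK_def by measurable

lemma Jshift:
  assumes a: "0 < a" "a < 1" and st: "s < t"
  shows "set_integrable lborel {s..t} (\<lambda>v. kerL a (t - v) * psi a (v - s))"
    "(LINT v:{s..t}|lborel. kerL a (t - v) * psi a (v - s)) \<le> CJ a * (1 + (t - s)) powr (-a)"
proof -
  define r where "r = t - s"
  have r: "r > 0" using st by (simp add: r_def)
  have S: "{x. s + 1*x \<in> {s..t}} = {0..r}"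
  proof -
    have "s + 1*x \<in> {s..t} \<longleftrightarrow> x \<in> {0..r}" for x by (auto simp: r_def)
    then show ?thesis by blast
  qed
  have fe: "kerL a (t - (s + 1*x)) * psi a (s + 1*x - s) = kerL a (r - x) * psi a x" for x
  proof -
    have e1: "t - (s + 1*x) = r - x" by (simp add: r_def)
    have e2: "s + 1*x - s = x" by simp
    show ?thesis by (simp only: e1 e2)
  qed
  have o: "(1::real) \<noteq> 0" by simp
  have i1: "set_integrable lborel {s..t} (\<lambda>v. kerL a (t - v) * psi a (v - s)) \<longleftrightarrow>
     set_integrable lborel {0..r} (\<lambda>x. kerL a (r - x) * psi a x)"
    using set_affine(2)[where c=1 and t=s and A="{s..t}" and f="\<lambda>v. kerL a (t - v) * psi a (v - s)", OF o]
    unfolding S fe .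
  have i2: "(LINT v:{s..t}|lborel. kerL a (t - v) * psi a (v - s)) =
     (LINT x:{0..r}|lborel. kerL a (r - x) * psi a x)"
    using set_affine(1)[where c=1 and t=s and A="{s..t}" and f="\<lambda>v. kerL a (t - v) * psi a (v - s)", OF o]
    unfolding S fe by simp
  show "set_integrable lborel {s..t} (\<lambda>v. kerL a (t - v) * psi a (v - s))"
    unfolding i1 using Jw[OF a r] by simp
  show "(LINT v:{s..t}|lborel. kerL a (t - v) * psi a (v - s)) \<le> CJ a * (1 + (t - s)) powr (-a)"
    unfolding i2 using Jw[OF a r] by (simp add: r_def)
qed

definition C0 :: "real \<Rightarrow> real" where "C0 a = 1 + (6 / Gamma a) * CJ a"

lemma CJ_pos: "0 < a \<Longrightarrow> a < 1 \<Longrightarrow> 0 < CJ a"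
  unfolding CJ_def by (intro add_pos_nonneg) (auto simp: Gamma_real_pos)

lemma gpoint:
  assumes a: "0 < a" "a < 1" and s: "0 \<le> s" "s \<le> t"
  shows "\<bar>gh a 1 t s - 1\<bar> \<le> C0 a * dd s powr (a - 1) * (1 + (t - s)) powr (-a)"
proof -
  have Ga: "Gamma a > 0" using a by (simp add: Gamma_real_pos)
  have D1: "1 \<le> dd s powr (a - 1)" using dd_pow_ge1 a by simp
  have C0: "1 \<le> C0 a" unfolding C0_def using CJ_pos[OF a] Ga by simp
  show ?thesis
  proof (cases "s = t")
    case True
    have "gh a 1 t s = 0"
      unfolding gh_def set_lebesgue_integral_def using True
      by (intro integral_eq_zero_AE) (use AE_lborel_singleton[of t] in \<open>eventually_elim, auto\<close>)
    then have "\<bar>gh a 1 t s - 1\<bar> = 1 * 1" by simp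
    also have "\<dots> \<le> C0 a * dd s powr (a - 1)" by (rule mult_mono[OF C0 D1]) (use C0 in auto)
    finally show ?thesis using True by simp
  next
    case False
    then have st: "s < t" using s by simp
    define c where "c = (6 / Gamma a) * dd s powr (a - 1)"
    have c: "0 \<le> c" using Ga by (simp add: c_def)
    define P where "P = (\<lambda>v. kerL a (t - v) * psi a (v - s))"
    define K1 where "K1 = (\<lambda>v. kerL a (t - v) * kerK a (v - s))"
    define D where "D = (\<lambda>v. kerL a (t - v) * (Kh a 1 v s - kerK a (v - s)))"
    note J = Jshift[OF a st, folded P_def]
    note B = beta_LK[OF a st, folded K1_def]
    have Dle: "\<bar>D v\<bar> \<le> c * P v" if v: "v \<in> {s..t}" for v
    proof (cases "v = s")
      case True
      have "\<not> s < real_of_int \<lfloor>s\<rfloor>" by linarith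
      then have "Kh a 1 s s = 0" by (simp add: Kh_def phi_def)
      then show ?thesis using True c by (simp add: D_def P_def kerK_def psi_def)
    next
      case False
      then have sv: "s < v" using v by simp
      have "\<bar>D v\<bar> = kerL a (t - v) * \<bar>Kh a 1 v s - kerK a (v - s)\<bar>"
        unfolding D_def using kerL_nonneg[OF a(2)] by (simp add: abs_mult)
      also have "\<dots> \<le> kerL a (t - v) * ((6 / Gamma a) * dd s powr (a - 1) * psi a (v - s))"
        by (rule mult_left_mono[OF kdiff[OF a s(1) sv] kerL_nonneg[OF a(2)]])
      finally show ?thesis by (simp add: c_def P_def ac_simps)
    qed
    have cP: "set_integrable lborel {s..t} (\<lambda>v. c * P v)" using J(1) by simp
    have DI: "set_integrable lborel {s..t} D"
    proof (rule set_integrable_bound[OF cP])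
      show "set_borel_measurable lborel {s..t} D"
        unfolding set_borel_measurable_def D_def using meas_D[of a t s] by measurable
      show "AE x in lborel. x \<in> {s..t} \<longrightarrow> norm (D x) \<le> norm (c * P x)"
        using Dle by (intro AE_I2) (auto intro: order_trans[OF _ abs_ge_self])
    qed
    have "gh a 1 t s = (LINT v:{s..t}|lborel. K1 v + D v)"
      unfolding gh_def K1_def D_def by (simp add: algebra_simps)
    also have "\<dots> = 1 + (LINT v:{s..t}|lborel. D v)"
      using set_integral_add(2)[OF B(1) DI] B(2) by simp
    finally have g: "gh a 1 t s - 1 = (LINT v:{s..t}|lborel. D v)" by simp
    have cPnn: "0 \<le> c * P v" if "v \<in> {s..t}" for v using Dle[OF that] by simp
    have u1: "(LINT v:{s..t}|lborel. D v) \<le> (LINT v:{s..t}|lborel. c * P v)"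
      by (rule set_int_mono'[OF cP _ cPnn]) (use Dle in force)
    have u2: "(LINT v:{s..t}|lborel. - D v) \<le> (LINT v:{s..t}|lborel. c * P v)"
      by (rule set_int_mono'[OF cP _ cPnn]) (use Dle in force)
    have u2': "- (LINT v:{s..t}|lborel. D v) \<le> (LINT v:{s..t}|lborel. c * P v)"
      using u2 set_integral_uminus[OF DI] by simp
    have "\<bar>gh a 1 t s - 1\<bar> \<le> (LINT v:{s..t}|lborel. c * P v)"
      unfolding g using u1 u2' by linarith
    also have "\<dots> = c * (LINT v:{s..t}|lborel. P v)" by simp
    also have "\<dots> \<le> c * (CJ a * (1 + (t - s)) powr (-a))"
      by (rule mult_left_mono[OF J(2) c])
    also have "\<dots> \<le> C0 a * dd s powr (a - 1) * (1 + (t - s)) powr (-a)"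
    proof -
      have "c * CJ a \<le> C0 a * dd s powr (a - 1)"
        unfolding c_def C0_def using D1 by (simp add: algebra_simps)
      then show ?thesis
        by (metis mult.assoc mult_right_mono powr_ge_zero)
    qed
    finally show ?thesis .
  qed
qed

lemma mvt_pow:
  fixes x q :: real assumes x: "0 < x"
  shows "\<exists>z. x < z \<and> z < x + 1 \<and> (x + 1) powr q - x powr q = q * z powr (q - 1)"
proof -
  have "\<exists>z::real. x < z \<and> z < x + 1 \<and> ((x + 1) powr q - x powr q = ((x + 1) - x) * (q * z powr (q - 1)))"
    by (rule MVT2) (use x in \<open>auto intro!: has_real_derivative_powr\<close>)
  then show ?thesis by simp
qed

lemma M1:
  fixes x p :: real assumes x: "0 \<le> x" and p: "0 < p" "p < 1"
  shows "(x + 1) powr (-p) \<le> ((x + 1) powr (1 - p) - x powr (1 - p)) / (1 - p)"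
proof (cases "x = 0")
  case True then show ?thesis using p by (simp add: field_simps)
next
  case False
  then have x0: "0 < x" using x by simp
  obtain z where z: "x < z" "z < x + 1" "(x + 1) powr (1 - p) - x powr (1 - p) = (1 - p) * z powr (1 - p - 1)"
    using mvt_pow[OF x0, of "1 - p"] by blast
  have "(x + 1) powr (-p) \<le> z powr (-p)" by (rule powr_mono2') (use p z x0 in auto)
  then have "(x + 1) powr (-p) * (1 - p) \<le> z powr (-p) * (1 - p)" by (rule mult_right_mono) (use p in auto)
  also have "\<dots> = (x + 1) powr (1 - p) - x powr (1 - p)" using z(3) by simp
  finally show ?thesis using p by (simp add: pos_le_divide_eq)
qed

lemma M2:
  fixes x p :: real assumes x: "0 < x" and p: "1 < p"
  shows "(x + 1) powr (-p) \<le> (x powr (1 - p) - (x + 1) powr (1 - p)) / (p - 1)"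
proof -
  obtain z where z: "x < z" "z < x + 1" "(x + 1) powr (1 - p) - x powr (1 - p) = (1 - p) * z powr (1 - p - 1)"
    using mvt_pow[OF x, of "1 - p"] by blast
  have "(x + 1) powr (-p) \<le> z powr (-p)" by (rule powr_mono2') (use p z x in auto)
  moreover have "x powr (1 - p) - (x + 1) powr (1 - p) = (p - 1) * z powr (-p)"
    using z(3) by (simp add: algebra_simps)
  ultimately have "(x + 1) powr (-p) * (p - 1) \<le> x powr (1 - p) - (x + 1) powr (1 - p)"
    using p by (simp add: mult.commute mult_left_mono)
  then show ?thesis using p by (simp add: pos_le_divide_eq)
qed

lemma S1:
  fixes p :: real assumes p: "0 < p" "p < 1"
  shows "(\<Sum>k<N. (real k + 1) powr (-p)) \<le> real N powr (1 - p) / (1 - p)"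
proof (induction N)
  case 0 then show ?case by simp
next
  case (Suc N)
  have "(\<Sum>k<Suc N. (real k + 1) powr (-p)) = (\<Sum>k<N. (real k + 1) powr (-p)) + (real N + 1) powr (-p)"
    by simp
  also have "\<dots> \<le> real N powr (1 - p) / (1 - p) + ((real N + 1) powr (1 - p) - real N powr (1 - p)) / (1 - p)"
    using Suc M1[of "real N" p] p by simp
  also have "\<dots> = real (Suc N) powr (1 - p) / (1 - p)"
    by (simp add: add_divide_distrib[symmetric] add.commute)
  finally show ?case .
qed

lemma S2:
  fixes p :: real assumes p: "1 < p"
  shows "(\<Sum>k<N. (real k + 1) powr (-p)) \<le> p / (p - 1) - real N powr (1 - p) / (p - 1)"
proof (induction N)
  case 0 then show ?case using p by simp
next
  case (Suc N)
  show ?case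
  proof (cases "N = 0")
    case True
    have "p / (p - 1) - 1 / (p - 1) = 1" using p by (simp add: diff_divide_distrib[symmetric])
    then show ?thesis using True by simp
  next
    case False
    then have N0: "0 < real N" by simp
    have "(\<Sum>k<Suc N. (real k + 1) powr (-p)) = (\<Sum>k<N. (real k + 1) powr (-p)) + (real N + 1) powr (-p)"
      by simp
    also have "\<dots> \<le> p / (p - 1) - real N powr (1 - p) / (p - 1) + (real N powr (1 - p) - (real N + 1) powr (1 - p)) / (p - 1)"
      using Suc M2[OF N0 p] by simp
    also have "\<dots> = p / (p - 1) - real (Suc N) powr (1 - p) / (p - 1)"
      by (simp add: diff_divide_distrib add.commute)
    finally show ?thesis .
  qed
qed

lemma S2':
  fixes p :: real assumes p: "1 < p"
  shows "(\<Sum>k<N. (real k + 1) powr (-p)) \<le> p / (p - 1)"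
proof -
  have "0 \<le> real N powr (1 - p) / (p - 1)" using p by simp
  then show ?thesis using S2[OF p, of N] by linarith
qed

definition Gm :: "real \<Rightarrow> real \<Rightarrow> real \<Rightarrow> real" where
  "Gm t p s = (1 + max (t - s) 0) powr (-p)"
definition Qs :: "real \<Rightarrow> real \<Rightarrow> real \<Rightarrow> real \<Rightarrow> real" where
  "Qs t b p s = dd s powr b * Gm t p s"

lemma Gm_mono: assumes "0 \<le> p" "s \<le> s'" shows "Gm t p s \<le> Gm t p s'"
  unfolding Gm_def by (rule powr_mono2') (use assms in auto)

lemma Gm_nonneg: "0 \<le> Gm t p s" by (simp add: Gm_def)
lemma Qs_nonneg: "0 \<le> Qs t b p s" by (simp add: Qs_def Gm_def)

lemma meas_Qs: "Qs t b p \<in> borel_measurable borel"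
  unfolding Qs_def Gm_def dd_def by measurable

lemma set_int_subset_mono:
  fixes f :: "real \<Rightarrow> real"
  assumes "set_integrable lborel B f" "A \<subseteq> B" "\<And>x. x \<in> B \<Longrightarrow> 0 \<le> f x"
  shows "(LINT x:A|lborel. f x) \<le> (LINT x:B|lborel. f x)"
  unfolding set_lebesgue_integral_def
  using assms(1) unfolding set_integrable_def
  by (rule integral_mono') (use assms(2,3) in \<open>auto simp: indicator_def\<close>)

lemma cell:
  fixes j :: nat and b p t :: real
  assumes b: "-1 < b" "b \<le> 0" and p: "0 \<le> p"
  shows "set_integrable lborel {real j..<real j + 1} (Qs t b p)"
    "(LINT s:{real j..<real j + 1}|lborel. Qs t b p s) \<le> Gm t p (real j + 1) / (1 + b)"
proof -
  have o: "(1::real) \<noteq> 0" by simp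
  have S: "{x. real j + 1*x \<in> {real j..<real j + 1}} = {0..<1}" by auto
  have fl: "dd (real j + 1*x) = 1 - x" if "x \<in> {0..<1}" for x
  proof -
    have "\<lfloor>real j + 1*x\<rfloor> = int j" using that by (simp add: floor_eq_iff)
    then show ?thesis by (simp add: dd_def)
  qed
  define H where "H = Gm t p (real j + 1)"
  have H: "0 \<le> H" by (simp add: H_def Gm_nonneg)
  have R: "set_integrable lborel {0..1} (\<lambda>x. (1 - x) powr b)"
    "(LINT x:{0..1}|lborel. (1 - x) powr b) = 1 / (1 + b)"
    using powr_int0_refl[of b 1] b by (auto simp: add.commute)
  have R': "set_integrable lborel {0..<1} (\<lambda>x. H * (1 - x) powr b)"
  proof -
    have "set_integrable lborel {0..<1} (\<lambda>x. (1 - x) powr b)"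
      by (rule set_integrable_subset[OF R(1)]) auto
    then show ?thesis by simp
  qed
  have bnd: "Qs t b p (real j + 1*x) \<le> H * (1 - x) powr b" if x: "x \<in> {0..<1}" for x
  proof -
    have "Gm t p (real j + 1*x) \<le> H" unfolding H_def by (rule Gm_mono) (use p x in auto)
    then have "Gm t p (real j + 1*x) * (1 - x) powr b \<le> H * (1 - x) powr b"
      by (rule mult_right_mono) simp
    then show ?thesis unfolding Qs_def fl[OF x] by (simp add: ac_simps)
  qed
  have I0: "set_integrable lborel {0..<1} (\<lambda>x. Qs t b p (real j + 1*x))"
  proof (rule set_integrable_bound[OF R'])
    show "set_borel_measurable lborel {0..<1} (\<lambda>x. Qs t b p (real j + 1 * x))"
      unfolding set_borel_measurable_def using meas_Qs[of t b p] by measurable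
    show "AE x in lborel. x \<in> {0..<1} \<longrightarrow> norm (Qs t b p (real j + 1 * x)) \<le> norm (H * (1 - x) powr b)"
      using bnd Qs_nonneg H by (intro AE_I2) auto
  qed
  have i1: "set_integrable lborel {real j..<real j + 1} (Qs t b p) \<longleftrightarrow>
      set_integrable lborel {0..<1} (\<lambda>x. Qs t b p (real j + 1*x))"
    using set_affine(2)[where c=1 and t="real j" and A="{real j..<real j + 1}" and f="Qs t b p", OF o]
    unfolding S .
  have i2: "(LINT s:{real j..<real j + 1}|lborel. Qs t b p s) =
      (LINT x:{0..<1}|lborel. Qs t b p (real j + 1*x))"
    using set_affine(1)[where c=1 and t="real j" and A="{real j..<real j + 1}" and f="Qs t b p", OF o]
    unfolding S by simp
  show "set_integrable lborel {real j..<real j + 1} (Qs t b p)" unfolding i1 by (rule I0)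
  have "(LINT x:{0..<1}|lborel. Qs t b p (real j + 1*x)) \<le> (LINT x:{0..<1}|lborel. H * (1 - x) powr b)"
    by (rule set_int_mono'[OF R' bnd]) (use H in auto)
  also have "\<dots> = H * (LINT x:{0..<1}|lborel. (1 - x) powr b)" by simp
  also have "\<dots> \<le> H * (LINT x:{0..1}|lborel. (1 - x) powr b)"
    by (rule mult_left_mono[OF set_int_subset_mono[OF R(1)] H]) auto
  also have "\<dots> = H / (1 + b)" using R(2) by simp
  finally show "(LINT s:{real j..<real j + 1}|lborel. Qs t b p s) \<le> Gm t p (real j + 1) / (1 + b)"
    unfolding i2 H_def .
qed

lemma saw:
  fixes t b p :: real
  assumes t: "0 \<le> t" and b: "-1 < b" "b \<le> 0" and p: "0 \<le> p"
  defines "N \<equiv> nat \<lfloor>t\<rfloor> + 1"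
  shows "set_integrable lborel {0..t} (\<lambda>s. dd s powr b * (1 + (t - s)) powr (-p))"
    "(LINT s:{0..t}|lborel. dd s powr b * (1 + (t - s)) powr (-p))
       \<le> (2 powr p / (1 + b)) * (\<Sum>k<N. (real k + 1) powr (-p))"
proof -
  define A where "A = (\<lambda>j::nat. {real j..<real j + 1})"
  define U where "U = (\<Union>j\<in>{..<N}. A j)"
  have cells: "set_integrable lborel (A j) (Qs t b p)" "(LINT s:A j|lborel. Qs t b p s) \<le> Gm t p (real j + 1) / (1 + b)"
    for j using cell[OF b p, of j t] by (auto simp: A_def)
  have Asets: "A j \<in> sets lborel" for j by (simp add: A_def)
  have UI: "set_integrable lborel U (Qs t b p)"
    unfolding U_def by (rule set_integrable_UN) (use cells Asets in auto)
  have sub: "{0..t} \<subseteq> U"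
  proof
    fix s assume s: "s \<in> {0..t}"
    define j where "j = nat \<lfloor>s\<rfloor>"
    have "\<lfloor>s\<rfloor> \<le> \<lfloor>t\<rfloor>" using s by (simp add: floor_mono)
    then have "j < N" using s by (simp add: j_def N_def)
    moreover have "s \<in> A j" using s by (simp add: A_def j_def)
    ultimately show "s \<in> U" by (auto simp: U_def)
  qed
  have eqQ: "Qs t b p s = dd s powr b * (1 + (t - s)) powr (-p)" if "s \<in> {0..t}" for s
    using that by (simp add: Qs_def Gm_def)
  have I0: "set_integrable lborel {0..t} (Qs t b p)"
    by (rule set_integrable_subset[OF UI _ sub]) simp
  show "set_integrable lborel {0..t} (\<lambda>s. dd s powr b * (1 + (t - s)) powr (-p))"
  proof -
    have "set_integrable lborel {0..t} (Qs t b p) \<longleftrightarrow> set_integrable lborel {0..t} (\<lambda>s. dd s powr b * (1 + (t - s)) powr (-p))"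
      by (rule set_integrable_cong) (use eqQ in auto)
    then show ?thesis using I0 by simp
  qed
  have "(LINT s:{0..t}|lborel. dd s powr b * (1 + (t - s)) powr (-p)) = (LINT s:{0..t}|lborel. Qs t b p s)"
    by (rule set_lebesgue_integral_cong) (use eqQ in auto)
  also have "\<dots> \<le> (LINT s:U|lborel. Qs t b p s)"
    by (rule set_int_subset_mono[OF UI sub]) (simp add: Qs_nonneg)
  also have "\<dots> = (\<Sum>j<N. LINT s:A j|lborel. Qs t b p s)"
    unfolding U_def
  proof (rule set_integral_finite_Union)
    show "disjoint_family_on A {..<N}"
      unfolding disjoint_family_on_def
    proof (intro ballI impI)
      fix j k assume "j \<in> {..<N}" "k \<in> {..<N}" "j \<noteq> k"
      show "A j \<inter> A k = {}"
      proof (rule ccontr)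
        assume "A j \<inter> A k \<noteq> {}"
        then obtain x where "x \<in> A j" "x \<in> A k" by blast
        then have "real j \<le> x" "x < real j + 1" "real k \<le> x" "x < real k + 1"
          by (auto simp: A_def)
        then have "real j < real k + 1" "real k < real j + 1" by linarith+
        then have "j < k + 1" "k < j + 1" by linarith+
        then show False using \<open>j \<noteq> k\<close> by linarith
      qed
    qed
  qed (use cells Asets in auto)
  also have "\<dots> \<le> (\<Sum>j<N. Gm t p (real j + 1) / (1 + b))"
    by (rule sum_mono) (use cells in auto)
  also have "\<dots> \<le> (\<Sum>j<N. 2 powr p * (real (N - Suc j) + 1) powr (-p) / (1 + b))"
  proof (rule sum_mono)
    fix j assume j: "j \<in> {..<N}"
    define m where "m = real (N - Suc j) + 1"
    have m: "m = real N - real j" using j by (simp add: m_def of_nat_diff)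
    have tN: "real N - 1 \<le> t" using t by (simp add: N_def)
    have m1: "1 \<le> m" using j by (simp add: m_def)
    have "m / 2 \<le> 1 + max (t - (real j + 1)) 0" using m tN m1 by linarith
    then have "Gm t p (real j + 1) \<le> (m / 2) powr (-p)"
      unfolding Gm_def by (intro powr_mono2') (use p m1 in auto)
    also have "\<dots> = 2 powr p * m powr (-p)"
      using m1 by (simp add: powr_divide powr_minus_divide)
    finally show "Gm t p (real j + 1) / (1 + b) \<le> 2 powr p * (real (N - Suc j) + 1) powr (-p) / (1 + b)"
      using b by (simp add: m_def divide_right_mono)
  qed
  also have "\<dots> = (2 powr p / (1 + b)) * (\<Sum>j<N. (real (N - Suc j) + 1) powr (-p))"
    by (simp add: sum_distrib_left)
  also have "(\<Sum>j<N. (real (N - Suc j) + 1) powr (-p)) = (\<Sum>k<N. (real k + 1) powr (-p))"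
    by (rule sum.nat_diff_reindex)
  finally show "(LINT s:{0..t}|lborel. dd s powr b * (1 + (t - s)) powr (-p))
       \<le> (2 powr p / (1 + b)) * (\<Sum>k<N. (real k + 1) powr (-p))" .
qed

lemma Q1:
  assumes a: "0 < a" "a < 1" and t: "0 \<le> t"
  shows "(LINT u:{0..t}|lborel. \<bar>gh a 1 t u - 1\<bar>) \<le> (C0 a * 2 powr a / (a * (1 - a))) * (1 + t) powr (1 - a)"
proof -
  define N where "N = nat \<lfloor>t\<rfloor> + 1"
  have b: "-1 < a - 1" "a - 1 \<le> 0" using a by auto
  note SW = saw[OF t b, of a, folded N_def]
  have C0p: "0 \<le> C0 a" unfolding C0_def using CJ_pos[OF a] a by (simp add: Gamma_real_pos)
  have BI: "set_integrable lborel {0..t} (\<lambda>s. C0 a * (dd s powr (a - 1) * (1 + (t - s)) powr (-a)))"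
    using SW(1) a by simp
  have "(LINT u:{0..t}|lborel. \<bar>gh a 1 t u - 1\<bar>) \<le> (LINT u:{0..t}|lborel. C0 a * (dd u powr (a - 1) * (1 + (t - u)) powr (-a)))"
  proof (rule set_int_mono'[OF BI])
    fix u assume u: "u \<in> {0..t}"
    show "\<bar>gh a 1 t u - 1\<bar> \<le> C0 a * (dd u powr (a - 1) * (1 + (t - u)) powr (-a))"
      using gpoint[OF a, of u t] u by (simp add: ac_simps)
    show "0 \<le> C0 a * (dd u powr (a - 1) * (1 + (t - u)) powr (-a))" using C0p by simp
  qed
  also have "\<dots> = C0 a * (LINT u:{0..t}|lborel. dd u powr (a - 1) * (1 + (t - u)) powr (-a))" by simp
  also have "\<dots> \<le> C0 a * ((2 powr a / (1 + (a - 1))) * (\<Sum>k<N. (real k + 1) powr (-a)))"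
    using SW(2) a by (intro mult_left_mono C0p) auto
  also have "\<dots> \<le> C0 a * ((2 powr a / a) * (real N powr (1 - a) / (1 - a)))"
  proof -
    have c: "0 \<le> 2 powr a / (1 + (a - 1))" using a by simp
    have "(1 + (a - 1)) = a" by simp
    then show ?thesis using mult_left_mono[OF mult_left_mono[OF S1[OF a, of N] c] C0p] by simp
  qed
  also have "\<dots> \<le> C0 a * ((2 powr a / a) * ((1 + t) powr (1 - a) / (1 - a)))"
  proof -
    have "real N \<le> 1 + t" using t by (simp add: N_def)
    then have "real N powr (1 - a) \<le> (1 + t) powr (1 - a)" by (intro powr_mono2) (use a in auto)
    then show ?thesis using a C0p by (intro mult_left_mono divide_right_mono) auto
  qed
  also have "\<dots> = (C0 a * 2 powr a / (a * (1 - a))) * (1 + t) powr (1 - a)" by simp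
  finally show ?thesis .
qed

lemma Q2:
  assumes a: "1/2 < a" "a < 1" and t: "0 \<le> t"
  shows "(LINT u:{0..t}|lborel. \<bar>gh a 1 t u - 1\<bar>\<^sup>2) \<le> C0 a ^ 2 * (2 powr (2 * a) / (2 * a - 1)) * (2 * a / (2 * a - 1))"
proof -
  have a0: "0 < a" using a by simp
  define N where "N = nat \<lfloor>t\<rfloor> + 1"
  have b: "-1 < 2 * a - 2" "2 * a - 2 \<le> 0" using a by auto
  note SW = saw[OF t b, of "2 * a", folded N_def]
  have C0p: "0 \<le> C0 a" unfolding C0_def using CJ_pos[OF a0 a(2)] a by (simp add: Gamma_real_pos)
  have BI: "set_integrable lborel {0..t} (\<lambda>s. C0 a ^ 2 * (dd s powr (2 * a - 2) * (1 + (t - s)) powr (-(2 * a))))"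
    using SW(1) a by simp
  have "(LINT u:{0..t}|lborel. \<bar>gh a 1 t u - 1\<bar>\<^sup>2) \<le> (LINT u:{0..t}|lborel. C0 a ^ 2 * (dd u powr (2 * a - 2) * (1 + (t - u)) powr (-(2 * a))))"
  proof (rule set_int_mono'[OF BI])
    fix u assume u: "u \<in> {0..t}"
    have g: "\<bar>gh a 1 t u - 1\<bar> \<le> C0 a * dd u powr (a - 1) * (1 + (t - u)) powr (-a)"
      using gpoint[OF a0 a(2), of u t] u by simp
    have "\<bar>gh a 1 t u - 1\<bar>\<^sup>2 \<le> (C0 a * dd u powr (a - 1) * (1 + (t - u)) powr (-a))\<^sup>2"
      by (rule power_mono[OF g]) simp
    also have "\<dots> = C0 a ^ 2 * ((dd u powr (a - 1))\<^sup>2 * ((1 + (t - u)) powr (-a))\<^sup>2)"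
      by (simp add: power_mult_distrib)
    also have "(dd u powr (a - 1))\<^sup>2 = dd u powr (2 * a - 2)"
      using powr_add[of "dd u" "a - 1" "a - 1"] by (simp add: power2_eq_square)
    also have "((1 + (t - u)) powr (-a))\<^sup>2 = (1 + (t - u)) powr (-(2 * a))"
      using powr_add[of "1 + (t - u)" "-a" "-a"] by (simp add: power2_eq_square)
    finally show "\<bar>gh a 1 t u - 1\<bar>\<^sup>2 \<le> C0 a ^ 2 * (dd u powr (2 * a - 2) * (1 + (t - u)) powr (-(2 * a)))" .
    show "0 \<le> C0 a ^ 2 * (dd u powr (2 * a - 2) * (1 + (t - u)) powr (-(2 * a)))" by simp
  qed
  also have "\<dots> = C0 a ^ 2 * (LINT u:{0..t}|lborel. dd u powr (2 * a - 2) * (1 + (t - u)) powr (-(2 * a)))" by simp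
  also have "\<dots> \<le> C0 a ^ 2 * ((2 powr (2 * a) / (1 + (2 * a - 2))) * (\<Sum>k<N. (real k + 1) powr (-(2 * a))))"
    using SW(2) a by (intro mult_left_mono) auto
  also have "\<dots> \<le> C0 a ^ 2 * ((2 powr (2 * a) / (2 * a - 1)) * (2 * a / (2 * a - 1)))"
  proof -
    have "1 < 2 * a" using a by simp
    note S = S2'[OF this, of N]
    have c: "0 \<le> 2 powr (2 * a) / (1 + (2 * a - 2))" using a by simp
    have "1 + (2 * a - 2) = 2 * a - 1" by simp
    then show ?thesis using mult_left_mono[OF mult_left_mono[OF S c], of "C0 a ^ 2"] by simp
  qed
  finally show ?thesis by (simp add: ac_simps)
qed

lemma outer_scale:
  fixes Phi :: "real \<Rightarrow> real"
  assumes h: "0 < h"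
  shows "(LINT u:{0..t}|lborel. Phi (gh a h t u)) = h * (LINT u:{0..t/h}|lborel. Phi (gh a 1 (t/h) u))"
proof -
  have hn: "h \<noteq> 0" using h by simp
  have S: "{x. 0 + h*x \<in> {0..t}} = {0..t/h}"
  proof -
    have "0 + h*x \<in> {0..t} \<longleftrightarrow> x \<in> {0..t/h}" for x
      using h by (simp add: zero_le_mult_iff pos_le_divide_eq mult.commute)
    then show ?thesis by blast
  qed
  have e: "Phi (gh a h t (0 + h*x)) = Phi (gh a 1 (t/h) x)" for x
    using gh_scale[OF h, of a t "0 + h*x"] h by simp
  show ?thesis
    using set_affine(1)[where c=h and t=0 and A="{0..t}" and f="\<lambda>u. Phi (gh a h t u)", OF hn] h
    unfolding S e by simp
qed

theorem mainTheorem4: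
  fixes T \<alpha> :: real
  assumes "T > 0" and "1/2 < \<alpha>" and "\<alpha> < 1"
  shows "\<exists>C>0. \<forall>t\<in>{0..T}. \<forall>h\<in>{0<..1}.
           (LINT u:{0..t}|lborel. \<bar>gh \<alpha> h t u - 1\<bar>) \<le> C * h powr \<alpha> \<and>
           (LINT u:{0..t}|lborel. \<bar>gh \<alpha> h t u - 1\<bar>\<^sup>2) \<le> C * h"
proof -
  have a: "0 < \<alpha>" "\<alpha> < 1" using assms by auto
  define K1 where "K1 = C0 \<alpha> * 2 powr \<alpha> / (\<alpha> * (1 - \<alpha>))"
  define K2 where "K2 = C0 \<alpha> ^ 2 * (2 powr (2 * \<alpha>) / (2 * \<alpha> - 1)) * (2 * \<alpha> / (2 * \<alpha> - 1))"
  have C0p: "0 \<le> C0 \<alpha>" unfolding C0_def using CJ_pos[OF a] a by (simp add: Gamma_real_pos)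
  have K1: "0 \<le> K1" unfolding K1_def using C0p a by simp
  have K2: "0 \<le> K2" unfolding K2_def using assms by simp
  define C where "C = K1 * (1 + T) powr (1 - \<alpha>) + K2 + 1"
  have C1: "K1 * (1 + T) powr (1 - \<alpha>) \<le> C" "K2 \<le> C" using K1 K2 by (auto simp: C_def)
  have Cp: "0 < C" using K1 K2 by (simp add: C_def add_nonneg_pos)
  show ?thesis
  proof (intro exI[of _ C] conjI Cp ballI)
    fix t h :: real assume t: "t \<in> {0..T}" and h: "h \<in> {0<..1}"
    have h0: "0 < h" and h1: "h \<le> 1" using h by auto
    have tp: "0 \<le> t / h" using t h0 by simp
    have "(LINT u:{0..t}|lborel. \<bar>gh \<alpha> h t u - 1\<bar>) = h * (LINT u:{0..t/h}|lborel. \<bar>gh \<alpha> 1 (t/h) u - 1\<bar>)"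
      using outer_scale[OF h0, where Phi="\<lambda>y. \<bar>y - 1\<bar>"] by simp
    also have "\<dots> \<le> h * (K1 * (1 + t/h) powr (1 - \<alpha>))"
      using Q1[OF a tp] h0 unfolding K1_def by (intro mult_left_mono) auto
    also have "\<dots> = K1 * (h powr \<alpha> * (h + t) powr (1 - \<alpha>))"
    proof -
      have "h = h powr \<alpha> * h powr (1 - \<alpha>)" using powr_add[of h \<alpha> "1 - \<alpha>"] h0 by simp
      moreover have "h powr (1 - \<alpha>) * (1 + t/h) powr (1 - \<alpha>) = (h + t) powr (1 - \<alpha>)"
        using powr_mult[of h "1 + t/h" "1 - \<alpha>"] h0 t by (simp add: distrib_left)
      ultimately show ?thesis by (metis mult.assoc mult.left_commute)
    qed
    also have "\<dots> \<le> K1 * (h powr \<alpha> * (1 + T) powr (1 - \<alpha>))"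
    proof -
      have "(h + t) powr (1 - \<alpha>) \<le> (1 + T) powr (1 - \<alpha>)"
        by (rule powr_mono2) (use a h0 h1 t in auto)
      then show ?thesis using K1 by (intro mult_left_mono) auto
    qed
    also have "\<dots> = (K1 * (1 + T) powr (1 - \<alpha>)) * h powr \<alpha>" by simp
    also have "\<dots> \<le> C * h powr \<alpha>" by (rule mult_right_mono[OF C1(1)]) simp
    finally show "(LINT u:{0..t}|lborel. \<bar>gh \<alpha> h t u - 1\<bar>) \<le> C * h powr \<alpha>" .
    have "(LINT u:{0..t}|lborel. \<bar>gh \<alpha> h t u - 1\<bar>\<^sup>2) = h * (LINT u:{0..t/h}|lborel. \<bar>gh \<alpha> 1 (t/h) u - 1\<bar>\<^sup>2)"
      using outer_scale[OF h0, where Phi="\<lambda>y. \<bar>y - 1\<bar>\<^sup>2"] by simp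
    also have "\<dots> \<le> h * K2"
      using Q2[OF assms(2,3) tp] h0 unfolding K2_def by (intro mult_left_mono) auto
    also have "\<dots> \<le> C * h" using C1(2) h0 by (simp add: mult.commute)
    finally show "(LINT u:{0..t}|lborel. \<bar>gh \<alpha> h t u - 1\<bar>\<^sup>2) \<le> C * h" .
  qed
qed

end
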